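(* For every graph $G$, any graph obtained from $G$ by subdividing every edge at least twice (i.e. replacing each edge by a path with at least two internal vertices, the numbers of internal vertices possibly differing between edges) belongs to 3-CBU.
   Context: Let $e_1,e_2,e_3$ be the standard basis of $\mathbb{R}^3$. A graph belongs to 3-CBU if one can assign to each vertex an axis-parallel box (product of 3 closed intervals of positive length) in $\mathbb{R}^3$ such that the boxes have pairwise disjoint interiors, two distinct vertices are adjacent iff their boxes intersect, and any two intersecting boxes intersect in a 2-dimensional box orthogonal to $e_1$. *)

theory Defs
  imports "HOL-Analysis.Analysis"
begin

definition simple_graph :: "'a set \<Rightarrow> 'a set set \<Rightarrow> bool" where
  "simple_graph V E \<longleftrightarrow> finite V \<and>
     (\<forall>e\<in>E. \<exists>u v. u \<noteq> v \<and> u \<in> V \<and> v \<in> V \<and> e = {u, v})"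

definition internal :: "'b list \<Rightarrow> 'b set" where
  "internal p = set (butlast (tl p))"

definition path_edges :: "'b list \<Rightarrow> 'b set set" where
  "path_edges p = {{p ! i, p ! Suc i} | i. Suc i < length p}"

text \<open>(W,F) is obtained from (V,E) by replacing every edge by a path with at least
  two internal vertices (up to isomorphism: f identifies the original vertices).\<close>
definition subdivided_twice ::
  "'a set \<Rightarrow> 'a set set \<Rightarrow> 'b set \<Rightarrow> 'b set set \<Rightarrow> bool" where
  "subdivided_twice V E W F \<longleftrightarrow>
    (\<exists>(f :: 'a \<Rightarrow> 'b) (P :: 'a set \<Rightarrow> 'b list).
       inj_on f V \<and>
       (\<forall>e\<in>E. \<exists>u v. e = {u, v} \<and> length (P e) \<ge> 4 \<and> distinct (P e) \<and>
                  hd (P e) = f u \<and> last (P e) = f v \<and> internal (P e) \<inter> f ` V = {}) \<and>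
       (\<forall>e\<in>E. \<forall>e'\<in>E. e \<noteq> e' \<longrightarrow> internal (P e) \<inter> internal (P e') = {}) \<and>
       W = f ` V \<union> (\<Union>e\<in>E. set (P e)) \<and>
       F = (\<Union>e\<in>E. path_edges (P e)))"

text \<open>Axis-parallel box with corners lo, hi; coordinates indexed by 1,2,3 :: 3,
  coordinate 1 corresponding to e_1.\<close>
definition cbu3 :: "'b set \<Rightarrow> 'b set set \<Rightarrow> bool" where
  "cbu3 W F \<longleftrightarrow>
    (\<exists>lo hi :: 'b \<Rightarrow> real^3.
       (\<forall>v\<in>W. \<forall>i. lo v $ i < hi v $ i) \<and>
       (\<forall>v\<in>W. \<forall>w\<in>W. v \<noteq> w \<longrightarrow>
          interior (cbox (lo v) (hi v)) \<inter> interior (cbox (lo w) (hi w)) = {} \<and>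
          ({v, w} \<in> F \<longleftrightarrow> cbox (lo v) (hi v) \<inter> cbox (lo w) (hi w) \<noteq> {}) \<and>
          (cbox (lo v) (hi v) \<inter> cbox (lo w) (hi w) \<noteq> {} \<longrightarrow>
             (\<exists>a b. cbox (lo v) (hi v) \<inter> cbox (lo w) (hi w) = cbox a b \<and>
                a $ 1 = b $ 1 \<and> a $ 2 < b $ 2 \<and> a $ 3 < b $ 3))))"

end

theory Submission
  imports Defs
begin

lemma internal_iff:
  assumes "length xs \<ge> 2"
  shows "x \<in> internal xs \<longleftrightarrow> (\<exists>p. 1 \<le> p \<and> p \<le> length xs - 2 \<and> x = xs ! p)"
proof
  assume "x \<in> internal xs"
  then obtain r where r: "r < length (butlast (tl xs))" "x = butlast (tl xs) ! r"
    unfolding internal_def by (auto simp: in_set_conv_nth)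
  then have "x = xs ! Suc r" using assms by (simp add: nth_butlast nth_tl)
  then show "\<exists>p. 1 \<le> p \<and> p \<le> length xs - 2 \<and> x = xs ! p" using r assms
    by (intro exI[of _ "Suc r"]) auto
next
  assume "\<exists>p. 1 \<le> p \<and> p \<le> length xs - 2 \<and> x = xs ! p"
  then obtain p where p: "1 \<le> p" "p \<le> length xs - 2" "x = xs ! p" by blast
  then obtain r where r: "p = Suc r" by (cases p) auto
  have "butlast (tl xs) ! r = xs ! p" using p r assms by (simp add: nth_butlast nth_tl)
  moreover have "r < length (butlast (tl xs))" using p r assms by simp
  ultimately show "x \<in> internal xs" unfolding internal_def using p(3)
    by (metis nth_mem)
qed

lemma internal_rev:
  assumes "length xs \<ge> 2"
  shows "internal (rev xs) = internal xs"
proof -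
  have "(\<exists>p. 1 \<le> p \<and> p \<le> length xs - 2 \<and> x = rev xs ! p) \<longleftrightarrow>
        (\<exists>p. 1 \<le> p \<and> p \<le> length xs - 2 \<and> x = xs ! p)" for x
  proof
    assume "\<exists>p. 1 \<le> p \<and> p \<le> length xs - 2 \<and> x = rev xs ! p"
    then obtain p where p: "1 \<le> p" "p \<le> length xs - 2" "x = rev xs ! p" by blast
    then show "\<exists>p. 1 \<le> p \<and> p \<le> length xs - 2 \<and> x = xs ! p" using assms
      by (intro exI[of _ "length xs - Suc p"]) (auto simp: rev_nth)
  next
    assume "\<exists>p. 1 \<le> p \<and> p \<le> length xs - 2 \<and> x = xs ! p"
    then obtain p where p: "1 \<le> p" "p \<le> length xs - 2" "x = xs ! p" by blast
    then show "\<exists>p. 1 \<le> p \<and> p \<le> length xs - 2 \<and> x = rev xs ! p" using assms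
      by (intro exI[of _ "length xs - Suc p"]) (auto simp: rev_nth)
  qed
  then show ?thesis using assms internal_iff[of xs] internal_iff[of "rev xs"] by auto
qed

lemma path_edges_rev: "path_edges (rev xs) = path_edges xs"
proof -
  have "{rev xs ! i, rev xs ! Suc i} \<in> path_edges xs" if "Suc i < length xs" for i
  proof -
    have "{rev xs ! i, rev xs ! Suc i} = {xs ! (length xs - 2 - i), xs ! Suc (length xs - 2 - i)}"
      using that by (auto simp: rev_nth Suc_diff_Suc numeral_2_eq_2)
    then show ?thesis unfolding path_edges_def using that by auto
  qed
  moreover have "{xs ! i, xs ! Suc i} \<in> path_edges (rev xs)" if "Suc i < length xs" for i
  proof -
    have "{xs ! i, xs ! Suc i} = {rev xs ! (length xs - 2 - i), rev xs ! Suc (length xs - 2 - i)}"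
      using that by (auto simp: rev_nth Suc_diff_Suc numeral_2_eq_2)
    then show ?thesis unfolding path_edges_def using that by auto
  qed
  ultimately show ?thesis unfolding path_edges_def[of xs] path_edges_def[of "rev xs"] by auto
qed


lemma geo_sep:
  fixes a b c d :: "real^3"
  assumes "b $ i < c $ i \<or> d $ i < a $ i"
  shows "cbox a b \<inter> cbox c d = {}" "interior (cbox a b) \<inter> interior (cbox c d) = {}"
proof -
  show 1: "cbox a b \<inter> cbox c d = {}" using assms by (auto simp: disjoint_interval_cart(1))
  show "interior (cbox a b) \<inter> interior (cbox c d) = {}"
    using 1 interior_subset by blast
qed

lemma geo_touch:
  fixes a b c d :: "real^3"
  assumes "\<forall>i. a $ i < b $ i" "\<forall>i. c $ i < d $ i"
    and "b $ 1 = c $ 1"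
    and "max (a$2) (c$2) < min (b$2) (d$2)" "max (a$3) (c$3) < min (b$3) (d$3)"
  shows "interior (cbox a b) \<inter> interior (cbox c d) = {}" "cbox a b \<inter> cbox c d \<noteq> {}"
    "\<exists>p q. cbox a b \<inter> cbox c d = cbox p q \<and> p $ 1 = q $ 1 \<and> p $ 2 < q $ 2 \<and> p $ 3 < q $ 3"
proof -
  show "interior (cbox a b) \<inter> interior (cbox c d) = {}"
    unfolding interior_cbox disjoint_interval_cart(4) using assms(3) by (intro exI[of _ 1]) simp
  have eq: "cbox a b \<inter> cbox c d = cbox (\<chi> i. max (a$i) (c$i)) (\<chi> i. min (b$i) (d$i))"
    using Int_interval_cart interval_cbox_cart by metis
  have le: "(\<chi> i. max (a$i) (c$i)) $ i \<le> (\<chi> i. min (b$i) (d$i)) $ i" for i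
    proof -
    have h: "a$1<b$1" "c$1<d$1" "a$2<b$2" "c$2<d$2" "a$3<b$3" "c$3<d$3" using assms(1,2) by auto
    show ?thesis using exhaust_3[of i] h assms(3-5) by (elim disjE) (auto simp: max_def min_def)
  qed
  show "cbox a b \<inter> cbox c d \<noteq> {}" unfolding eq using le
    by (simp add: interval_ne_empty_cart)  
  show "\<exists>p q. cbox a b \<inter> cbox c d = cbox p q \<and> p $ 1 = q $ 1 \<and> p $ 2 < q $ 2 \<and> p $ 3 < q $ 3"
  proof -
    have h: "a$1<b$1" "c$1<d$1" using assms(1,2) by auto
    show ?thesis apply (rule exI[of _ "\<chi> i. max (a$i) (c$i)"], rule exI[of _ "\<chi> i. min (b$i) (d$i)"])
      using eq h assms(3-5) by (auto simp: max_def min_def)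
  qed
qed


lemma geo_touch':
  fixes a b c d :: "real^3"
  assumes "\<forall>i. a $ i < b $ i" "\<forall>i. c $ i < d $ i"
    and "d $ 1 = a $ 1"
    and "max (c$2) (a$2) < min (d$2) (b$2)" "max (c$3) (a$3) < min (d$3) (b$3)"
  shows "interior (cbox a b) \<inter> interior (cbox c d) = {}" "cbox a b \<inter> cbox c d \<noteq> {}"
    "\<exists>p q. cbox a b \<inter> cbox c d = cbox p q \<and> p $ 1 = q $ 1 \<and> p $ 2 < q $ 2 \<and> p $ 3 < q $ 3"
proof -
  note g = geo_touch[OF assms(2) assms(1) assms(3) assms(4) assms(5)]
  show "interior (cbox a b) \<inter> interior (cbox c d) = {}" using g(1) by (metis Int_commute)
  show "cbox a b \<inter> cbox c d \<noteq> {}" using g(2) by (metis Int_commute)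
  show "\<exists>p q. cbox a b \<inter> cbox c d = cbox p q \<and> p $ 1 = q $ 1 \<and> p $ 2 < q $ 2 \<and> p $ 3 < q $ 3"
    using g(3) by (metis Int_commute)
qed


locale subd =
  fixes V :: "'a set" and E :: "'a set set" and W :: "'b set" and F :: "'b set set"
    and f :: "'a \<Rightarrow> 'b" and P :: "'a set \<Rightarrow> 'b list" and a :: "'a \<Rightarrow> nat"
    and bi :: "'a set \<Rightarrow> nat" and K :: nat
  assumes Esub: "\<forall>e\<in>E. \<exists>u v. u \<noteq> v \<and> u \<in> V \<and> v \<in> V \<and> e = {u, v}"
    and injf: "inj_on f V" and inja: "inj_on a V" and injb: "inj_on bi E"
    and bK: "\<forall>e\<in>E. bi e < K"
    and paths: "\<forall>e\<in>E. \<exists>u v. e = {u, v} \<and> length (P e) \<ge> 4 \<and> distinct (P e) \<and>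
                  hd (P e) = f u \<and> last (P e) = f v \<and> internal (P e) \<inter> f ` V = {}"
    and disj: "\<forall>e\<in>E. \<forall>e'\<in>E. e \<noteq> e' \<longrightarrow> internal (P e) \<inter> internal (P e') = {}"
    and Wdef: "W = f ` V \<union> (\<Union>e\<in>E. set (P e))"
    and Fdef: "F = (\<Union>e\<in>E. path_edges (P e))"
begin

definition ai :: "'b \<Rightarrow> nat" where "ai w = a (inv_into V f w)"

lemma ai_f: "x \<in> V \<Longrightarrow> ai (f x) = a x"
  unfolding ai_def using injf by simp

lemma ai_inj: "v \<in> f ` V \<Longrightarrow> w \<in> f ` V \<Longrightarrow> ai v = ai w \<Longrightarrow> v = w"
  using ai_f inja by (auto dest: inj_onD)

definition Q :: "'a set \<Rightarrow> 'b list" where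
  "Q e = (if ai (hd (P e)) < ai (last (P e)) then P e else rev (P e))"

lemma Pprops:
  assumes "e \<in> E"
  shows "length (P e) \<ge> 4" "distinct (P e)" "hd (P e) \<in> f ` V" "last (P e) \<in> f ` V"
    "internal (P e) \<inter> f ` V = {}" "ai (hd (P e)) \<noteq> ai (last (P e))"
proof -
  obtain u v where uv: "e = {u, v}" "length (P e) \<ge> 4" "distinct (P e)"
    "hd (P e) = f u" "last (P e) = f v" "internal (P e) \<inter> f ` V = {}"
    using paths assms by blast
  obtain u' v' where u'v': "u' \<noteq> v'" "u' \<in> V" "v' \<in> V" "e = {u', v'}" using Esub assms by blast
  have "u \<noteq> v" "u \<in> V" "v \<in> V" using uv(1) u'v' by (auto simp: doubleton_eq_iff)
  then show "length (P e) \<ge> 4" "distinct (P e)" "hd (P e) \<in> f ` V" "last (P e) \<in> f ` V"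
    "internal (P e) \<inter> f ` V = {}" "ai (hd (P e)) \<noteq> ai (last (P e))"
    using uv ai_f inja by (auto dest: inj_onD)
qed

lemma Qprops:
  assumes "e \<in> E"
  shows "length (Q e) = length (P e)" "length (Q e) \<ge> 4" "distinct (Q e)" "set (Q e) = set (P e)"
    "internal (Q e) = internal (P e)" "path_edges (Q e) = path_edges (P e)"
    "hd (Q e) \<in> f ` V" "last (Q e) \<in> f ` V" "ai (hd (Q e)) < ai (last (Q e))"
    "internal (Q e) \<inter> f ` V = {}"
proof -
  note p = Pprops[OF assms]
  have ne: "P e \<noteq> []" using p(1) by auto
  show "length (Q e) = length (P e)" "length (Q e) \<ge> 4" "distinct (Q e)" "set (Q e) = set (P e)"
    "internal (Q e) = internal (P e)" "path_edges (Q e) = path_edges (P e)"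
    "hd (Q e) \<in> f ` V" "last (Q e) \<in> f ` V" "ai (hd (Q e)) < ai (last (Q e))"
    "internal (Q e) \<inter> f ` V = {}"
    unfolding Q_def using p ne internal_rev[of "P e"] path_edges_rev[of "P e"]
    by (auto simp: hd_rev last_rev)
qed

lemma Q_internal:
  assumes "e \<in> E"
  shows "w \<in> internal (Q e) \<longleftrightarrow> (\<exists>p. 1 \<le> p \<and> p \<le> length (Q e) - 2 \<and> w = Q e ! p)"
  using internal_iff[of "Q e"] Qprops[OF assms] by auto

lemma Q_pos:
  assumes "e \<in> E" "p < length (Q e)"
  shows "Q e ! p \<in> f ` V \<longleftrightarrow> p = 0 \<or> p = length (Q e) - 1"
proof
  note q = Qprops[OF assms(1)]
  have ne: "Q e \<noteq> []" using q(2) by auto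
  assume "Q e ! p \<in> f ` V"
  show "p = 0 \<or> p = length (Q e) - 1"
  proof (rule ccontr)
    assume "\<not> (p = 0 \<or> p = length (Q e) - 1)"
    then have "1 \<le> p" "p \<le> length (Q e) - 2" using assms by auto
    then have "Q e ! p \<in> internal (Q e)" using Q_internal[OF assms(1)] by auto
    then show False using q(10) \<open>Q e ! p \<in> f ` V\<close> by auto
  qed
next
  note q = Qprops[OF assms(1)]
  have ne: "Q e \<noteq> []" using q(2) by auto
  assume "p = 0 \<or> p = length (Q e) - 1"
  then show "Q e ! p \<in> f ` V" using q(7,8) ne by (auto simp: hd_conv_nth last_conv_nth)
qed

lemma W_alt: "W = f ` V \<union> (\<Union>e\<in>E. set (Q e))"
  using Wdef Qprops(4) by auto

lemma F_alt: "F = (\<Union>e\<in>E. path_edges (Q e))"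
  using Fdef Qprops(6) by auto

definition eo :: "'b \<Rightarrow> 'a set" where
  "eo w = (THE e. e \<in> E \<and> w \<in> internal (Q e))"

definition po :: "'b \<Rightarrow> nat" where
  "po w = (THE p. p < length (Q (eo w)) \<and> Q (eo w) ! p = w)"

lemma eo_po_unique:
  assumes "e \<in> E" "1 \<le> p" "p \<le> length (Q e) - 2"
  shows "eo (Q e ! p) = e" "po (Q e ! p) = p"
proof -
  have int: "Q e ! p \<in> internal (Q e)" using Q_internal[OF assms(1)] assms by auto
  have "e' = e" if "e' \<in> E" "Q e ! p \<in> internal (Q e')" for e'
    using disj that int assms(1) Qprops(5) by blast
  then show 1: "eo (Q e ! p) = e" unfolding eo_def using int assms(1)
    by (intro the_equality) auto
  have "p < length (Q e)" using assms Qprops(2)[OF assms(1)] by auto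
  then show "po (Q e ! p) = p" unfolding po_def 1 using Qprops(3)[OF assms(1)]
    by (intro the_equality) (auto simp: nth_eq_iff_index_eq)
qed

lemma internal_vertex:
  assumes "w \<in> W" "w \<notin> f ` V"
  shows "eo w \<in> E" "1 \<le> po w" "po w \<le> length (Q (eo w)) - 2" "Q (eo w) ! po w = w"
proof -
  obtain e where e: "e \<in> E" "w \<in> set (Q e)" using assms W_alt by auto
  then obtain p where p: "p < length (Q e)" "w = Q e ! p" by (auto simp: in_set_conv_nth)
  have "\<not> (p = 0 \<or> p = length (Q e) - 1)" using Q_pos[OF e(1) p(1)] p assms by auto
  then have pp: "1 \<le> p" "p \<le> length (Q e) - 2" using p by auto
  show "eo w \<in> E" "1 \<le> po w" "po w \<le> length (Q (eo w)) - 2" "Q (eo w) ! po w = w"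
    using eo_po_unique[OF e(1) pp] p e pp by auto
qed

lemma adj_char:
  assumes "e \<in> E" "1 \<le> p" "p \<le> length (Q e) - 2"
  shows "{v, Q e ! p} \<in> F \<longleftrightarrow> v = Q e ! (p - 1) \<or> v = Q e ! (p + 1)"
proof
  let ?w = "Q e ! p"
  have lq: "length (Q e) \<ge> 4" using Qprops[OF assms(1)] by auto
  have int: "?w \<in> internal (Q e)" using Q_internal[OF assms(1)] assms by auto
  assume "{v, ?w} \<in> F"
  then obtain e' q where e': "e' \<in> E" "Suc q < length (Q e')" "{v, ?w} = {Q e' ! q, Q e' ! Suc q}"
    unfolding F_alt path_edges_def by auto
  have wnot: "?w \<notin> f ` V" using int Qprops(10)[OF assms(1)] by auto
  have "?w \<in> {Q e' ! q, Q e' ! Suc q}" using e'(3) by blast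
  then obtain r where r: "r < length (Q e')" "?w = Q e' ! r" "r = q \<or> r = Suc q"
    using e'(2) by (metis Suc_lessD empty_iff insert_iff)
  have "\<not> (r = 0 \<or> r = length (Q e') - 1)" using Q_pos[OF e'(1) r(1)] r wnot by auto
  then have "1 \<le> r" "r \<le> length (Q e') - 2" using r(1) by auto
  then have "?w \<in> internal (Q e')" using Q_internal[OF e'(1)] r(2) by auto
  then have ee: "e' = e" using disj e'(1) assms(1) int Qprops(5) by blast
  have d: "distinct (Q e)" using Qprops(3)[OF assms(1)] .
  have "p < length (Q e)" using assms lq by auto
  then have "r = p" using r ee d by (simp add: nth_eq_iff_index_eq)
  then show "v = Q e ! (p - 1) \<or> v = Q e ! (p + 1)"
    using r e' ee by (auto simp: doubleton_eq_iff)
next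
  have lq: "length (Q e) \<ge> 4" using Qprops[OF assms(1)] by auto
  assume "v = Q e ! (p - 1) \<or> v = Q e ! (p + 1)"
  then show "{v, Q e ! p} \<in> F"
  proof
    assume v: "v = Q e ! (p - 1)"
    have "{Q e ! (p - 1), Q e ! Suc (p - 1)} \<in> path_edges (Q e)"
      unfolding path_edges_def using assms lq by auto
    then show ?thesis using v assms F_alt by auto
  next
    assume v: "v = Q e ! (p + 1)"
    have "{Q e ! p, Q e ! Suc p} \<in> path_edges (Q e)"
      unfolding path_edges_def using assms lq by auto
    then show ?thesis using v assms F_alt by (auto simp: insert_commute)
  qed
qed

lemma vv_notF:
  assumes "v \<in> f ` V" "w \<in> f ` V"
  shows "{v, w} \<notin> F"
proof
  assume "{v, w} \<in> F"
  then obtain e q where e: "e \<in> E" "Suc q < length (Q e)" "{v, w} = {Q e ! q, Q e ! Suc q}"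
    unfolding F_alt path_edges_def by auto
  have lq: "length (Q e) \<ge> 4" using Qprops[OF e(1)] by auto
  have "Q e ! q \<in> {v, w}" "Q e ! Suc q \<in> {v, w}" using e(3) by blast+
  then have "Q e ! q \<in> f ` V" "Q e ! Suc q \<in> f ` V" using assms by auto
  then have "q = 0 \<or> q = length (Q e) - 1" "Suc q = 0 \<or> Suc q = length (Q e) - 1"
    using Q_pos[OF e(1)] e(2) by (meson Suc_lessD)+
  then show False using e(2) lq by auto
qed

end

context subd begin

definition mm :: "'b \<Rightarrow> nat" where "mm w = length (Q (eo w)) - 2"
definition ii :: "'b \<Rightarrow> nat" where "ii w = ai (hd (Q (eo w)))"
definition jj :: "'b \<Rightarrow> nat" where "jj w = ai (last (Q (eo w)))"
definition kk :: "'b \<Rightarrow> nat" where "kk w = bi (eo w)"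

definition X1 :: "'b \<Rightarrow> real" where
  "X1 w = (if w \<in> f ` V then 4 * real (ai w) else if po w < mm w
     then 4 * real (ii w) + 1 + (real (po w) - 1) / (real (mm w) - 1) else 4 * real (ii w) + 2)"
definition X2 :: "'b \<Rightarrow> real" where
  "X2 w = (if w \<in> f ` V then 4 * real (ai w) + 1 else if po w < mm w
     then 4 * real (ii w) + 1 + real (po w) / (real (mm w) - 1) else 4 * real (jj w))"
definition Y1 :: "'b \<Rightarrow> real" where
  "Y1 w = (if w \<in> f ` V then 0 else 3 * real (kk w))"
definition Y2 :: "'b \<Rightarrow> real" where
  "Y2 w = (if w \<in> f ` V then 3 * real K + 1 else 3 * real (kk w) + 1)"
definition Z1 :: "'b \<Rightarrow> real" where
  "Z1 w = (if w \<in> f ` V then 3 * real (ai w) else if po w < mm w then 3 * real (ii w) else 3 * real (jj w))"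
definition Z2 :: "'b \<Rightarrow> real" where
  "Z2 w = (if w \<in> f ` V then 3 * real (ai w) + 1 else 3 * real (jj w) + 1)"

definition touch :: "'b \<Rightarrow> 'b \<Rightarrow> bool" where
  "touch v w \<longleftrightarrow> X2 v = X1 w \<and> max (Y1 v) (Y1 w) < min (Y2 v) (Y2 w) \<and>
     max (Z1 v) (Z1 w) < min (Z2 v) (Z2 w)"
definition sep :: "'b \<Rightarrow> 'b \<Rightarrow> bool" where
  "sep v w \<longleftrightarrow> X2 v < X1 w \<or> X2 w < X1 v \<or> Y2 v < Y1 w \<or> Y2 w < Y1 v \<or> Z2 v < Z1 w \<or> Z2 w < Z1 v"
definition good :: "'b \<Rightarrow> 'b \<Rightarrow> bool" where
  "good v w \<longleftrightarrow> ({v, w} \<in> F \<and> (touch v w \<or> touch w v)) \<or> ({v, w} \<notin> F \<and> sep v w)"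

lemma good_sym: "good v w \<Longrightarrow> good w v"
  unfolding good_def sep_def by (auto simp: insert_commute)

lemma internal_facts:
  assumes "w \<in> W" "w \<notin> f ` V"
  shows "eo w \<in> E" "mm w \<ge> 2" "1 \<le> po w" "po w \<le> mm w" "Q (eo w) ! po w = w"
    "ii w < jj w" "kk w < K" "length (Q (eo w)) = mm w + 2"
    "hd (Q (eo w)) = Q (eo w) ! 0" "last (Q (eo w)) = Q (eo w) ! (mm w + 1)"
proof -
  note iv = internal_vertex[OF assms]
  note q = Qprops[OF iv(1)]
  show "eo w \<in> E" "1 \<le> po w" "po w \<le> mm w" "Q (eo w) ! po w = w" "mm w \<ge> 2"
    "ii w < jj w" "kk w < K" "length (Q (eo w)) = mm w + 2"
    using iv q bK unfolding mm_def ii_def jj_def kk_def by auto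
  show "hd (Q (eo w)) = Q (eo w) ! 0" "last (Q (eo w)) = Q (eo w) ! (mm w + 1)"
  proof -
    have ne: "Q (eo w) \<noteq> []" using q(2) by auto
    show "hd (Q (eo w)) = Q (eo w) ! 0" using ne by (simp add: hd_conv_nth)
    have "length (Q (eo w)) - 1 = mm w + 1" using q(2) unfolding mm_def by auto
    then show "last (Q (eo w)) = Q (eo w) ! (mm w + 1)" using ne by (simp add: last_conv_nth)
  qed
qed

lemma eo_po_at:
  assumes "e \<in> E" "r < length (Q e)" "Q e ! r \<notin> f ` V"
  shows "eo (Q e ! r) = e" "po (Q e ! r) = r" "1 \<le> r" "r \<le> length (Q e) - 2"
proof -
  have "\<not> (r = 0 \<or> r = length (Q e) - 1)" using Q_pos[OF assms(1,2)] assms(3) by auto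
  then show "1 \<le> r" "r \<le> length (Q e) - 2" using assms(2) by auto
  then show "eo (Q e ! r) = e" "po (Q e ! r) = r" using eo_po_unique[OF assms(1)] by auto
qed

lemma Wf: "f ` V \<subseteq> W" using Wdef by auto

lemma good_VV:
  assumes "v \<in> f ` V" "w \<in> f ` V" "v \<noteq> w"
  shows "good v w"
proof -
  have "ai v \<noteq> ai w" using ai_inj assms by blast
  then have "sep v w" using assms unfolding sep_def X1_def X2_def by auto
  then show ?thesis using vv_notF assms unfolding good_def by auto
qed

end

context subd begin

lemma frac_facts:
  fixes p m :: nat
  assumes "1 \<le> p" "p < m"
  shows "(real p - 1) / (real m - 1) \<ge> 0" "real p / (real m - 1) \<le> 1"
    "p = m - 1 \<Longrightarrow> real p / (real m - 1) = 1"
    "p < m - 1 \<Longrightarrow> real p / (real m - 1) < 1"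
    "p \<ge> 2 \<Longrightarrow> (real p - 1) / (real m - 1) > 0"
proof -
  have d: "real m - 1 > 0" using assms by auto
  show "(real p - 1) / (real m - 1) \<ge> 0" using d assms by auto
  show "real p / (real m - 1) \<le> 1" using d assms by (simp add: divide_le_eq_1)
  show "p = m - 1 \<Longrightarrow> real p / (real m - 1) = 1" using d assms by (simp add: of_nat_diff)
  show "p < m - 1 \<Longrightarrow> real p / (real m - 1) < 1" using d assms by (simp add: divide_less_eq_1 of_nat_diff)
  show "p \<ge> 2 \<Longrightarrow> (real p - 1) / (real m - 1) > 0" using d assms by auto
qed

lemma good_VI:
  assumes v: "v \<in> f ` V" and w: "w \<in> W" "w \<notin> f ` V"
  shows "good v w"
proof -
  note I = internal_facts[OF w]
  define e where "e = eo w"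
  define p where "p = po w"
  define m where "m = mm w"
  define i where "i = ii w"
  define j where "j = jj w"
  define k where "k = kk w"
  define l where "l = ai v"
  have I': "e \<in> E" "m \<ge> 2" "1 \<le> p" "p \<le> m" "Q e ! p = w" "i < j" "k < K" "length (Q e) = m + 2"
    "ai (Q e ! 0) = i" "ai (Q e ! (m+1)) = j" "Q e ! 0 \<in> f ` V" "Q e ! (m+1) \<in> f ` V"
    using I Qprops(7,8)[OF I(1)] unfolding e_def p_def m_def i_def j_def k_def ii_def jj_def by auto
  have adj: "{v, w} \<in> F \<longleftrightarrow> v = Q e ! (p - 1) \<or> v = Q e ! (p + 1)"
    using adj_char[OF I'(1,3)] I'(4,5,8) by auto
  have Yv: "Y1 v = 0" "Y2 v = 3 * real K + 1" "Y1 w = 3 * real k" "Y2 w = 3 * real k + 1"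
    using v w unfolding Y1_def Y2_def k_def by auto
  have Ygood: "max (Y1 v) (Y1 w) < min (Y2 v) (Y2 w)" using Yv I'(7) by auto
  have Xv: "X1 v = 4 * real l" "X2 v = 4 * real l + 1" "Z1 v = 3 * real l" "Z2 v = 3 * real l + 1"
    using v unfolding X1_def X2_def Z1_def Z2_def l_def by auto
  have Xw: "p < m \<Longrightarrow> X1 w = 4 * real i + 1 + (real p - 1) / (real m - 1)"
    "p < m \<Longrightarrow> X2 w = 4 * real i + 1 + real p / (real m - 1)"
    "\<not> p < m \<Longrightarrow> X1 w = 4 * real i + 2" "\<not> p < m \<Longrightarrow> X2 w = 4 * real j"
    "p < m \<Longrightarrow> Z1 w = 3 * real i" "\<not> p < m \<Longrightarrow> Z1 w = 3 * real j" "Z2 w = 3 * real j + 1"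
    using w unfolding X1_def X2_def Z1_def Z2_def p_def m_def i_def j_def by auto
  show ?thesis
  proof (cases "p = 1 \<and> l = i")
    case True
    have "v = Q e ! 0" using ai_inj v I'(9,11) True l_def by auto
    then have F: "{v, w} \<in> F" using adj True by auto
    have "touch v w" unfolding touch_def using Xv Xw True I' Ygood by auto
    then show ?thesis using F unfolding good_def by auto
  next
    case c1: False
    show ?thesis
    proof (cases "p = m \<and> l = j")
      case True
      have "v = Q e ! (m+1)" using ai_inj v I'(10,12) True l_def by auto
      then have F: "{v, w} \<in> F" using adj True by auto
      have "touch w v" unfolding touch_def using Xv Xw True I' Ygood by (auto simp: max.commute min.commute)
      then show ?thesis using F unfolding good_def by auto
    next
      case c2: False
      have nF: "{v, w} \<notin> F"
      proof
        assume "{v, w} \<in> F"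
        then have "v = Q e ! (p - 1) \<or> v = Q e ! (p + 1)" using adj by auto
        then show False
        proof
          assume vv: "v = Q e ! (p - 1)"
          then have "p - 1 = 0 \<or> p - 1 = length (Q e) - 1" using Q_pos[OF I'(1), of "p - 1"] I' v by auto
          then have "p = 1" using I' by auto
          then show False using c1 vv I'(9) l_def by auto
        next
          assume vv: "v = Q e ! (p + 1)"
          then have "p + 1 = 0 \<or> p + 1 = length (Q e) - 1" using Q_pos[OF I'(1), of "p + 1"] I' v by auto
          then have "p = m" using I' by auto
          then show False using c2 vv I'(10) l_def by auto
        qed
      qed
      have "sep v w"
      proof (cases "p < m")
        case pm: True
        note fr = frac_facts[OF I'(3) pm]
        show ?thesis
        proof (cases "l < i")
          case True then show ?thesis unfolding sep_def using Xv Xw pm fr by auto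
        next
          case False
          show ?thesis
          proof (cases "l = i")
            case True
            then have "p \<ge> 2" using c1 I' by auto
            then show ?thesis unfolding sep_def using Xv Xw pm fr True by auto
          next
            case False
            then have "i < l" using \<open>\<not> l < i\<close> by auto
            then show ?thesis unfolding sep_def using Xv Xw pm fr by auto
          qed
        qed
      next
        case pm: False
        then have pm': "p = m" using I' by auto
        then have "l \<noteq> j" using c2 by auto
        show ?thesis
        proof (cases "l \<le> i")
          case True then show ?thesis unfolding sep_def using Xv Xw pm by auto
        next
          case False
          show ?thesis
          proof (cases "l < j")
            case True then show ?thesis unfolding sep_def using Xv Xw pm by auto
          next
            case False then have "j < l" using \<open>l \<noteq> j\<close> by auto
            then show ?thesis unfolding sep_def using Xv Xw pm by auto
          qed
        qed
      qed
      then show ?thesis using nF unfolding good_def by auto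
    qed
  qed
qed

end

context subd begin

lemma good_II_diff:
  assumes v: "v \<in> W" "v \<notin> f ` V" and w: "w \<in> W" "w \<notin> f ` V" and ne: "eo v \<noteq> eo w"
  shows "good v w"
proof -
  note Iv = internal_facts[OF v] and Iw = internal_facts[OF w]
  have "kk v \<noteq> kk w" using injb Iv(1) Iw(1) ne unfolding kk_def by (auto dest: inj_onD)
  then have S: "sep v w" unfolding sep_def Y1_def Y2_def using v w by auto
  have nF: "{v, w} \<notin> F"
  proof
    assume "{v, w} \<in> F"
    then have "{v, Q (eo w) ! po w} \<in> F" using Iw by simp
    then have vv: "v = Q (eo w) ! (po w - 1) \<or> v = Q (eo w) ! (po w + 1)"
      using adj_char[OF Iw(1,3)] Iw(4,8) by auto
    have "po w - 1 < length (Q (eo w))" "po w + 1 < length (Q (eo w))" using Iw(4,8) by auto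
    then obtain r where r: "r < length (Q (eo w))" "v = Q (eo w) ! r"
      using vv by blast
    then have "eo v = eo w" using eo_po_at[OF Iw(1) r(1)] v by auto
    then show False using ne by simp
  qed
  show ?thesis using S nF unfolding good_def by auto
qed

lemma good_II_same:
  assumes v: "v \<in> W" "v \<notin> f ` V" and w: "w \<in> W" "w \<notin> f ` V" and eq: "eo v = eo w"
    and lt: "po v < po w"
  shows "good v w"
proof -
  note Iv = internal_facts[OF v] and Iw = internal_facts[OF w]
  define e where "e = eo w"
  define p where "p = po v"
  define p' where "p' = po w"
  define m where "m = mm w"
  define i where "i = ii w"
  define j where "j = jj w"
  define k where "k = kk w"
  have same: "mm v = m" "ii v = i" "jj v = j" "kk v = k"
    unfolding mm_def ii_def jj_def kk_def m_def i_def j_def k_def eq by auto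
  have I1: "e \<in> E" unfolding e_def by (rule Iw(1))
  have I2: "m \<ge> 2" unfolding m_def by (rule Iw(2))
  have I3: "1 \<le> p" unfolding p_def by (rule Iv(3))
  have I4: "p' \<le> m" unfolding p'_def m_def by (rule Iw(4))
  have I5: "Q e ! p = v" unfolding e_def p_def using Iv(5) eq by simp
  have I6: "Q e ! p' = w" unfolding e_def p'_def by (rule Iw(5))
  have I7: "i < j" unfolding i_def j_def by (rule Iw(6))
  have I8: "k < K" unfolding k_def by (rule Iw(7))
  have I9: "length (Q e) = m + 2" unfolding e_def m_def by (rule Iw(8))
  have I10: "p < p'" unfolding p_def p'_def by (rule lt)
  note I' = I1 I2 I3 I4 I5 I6 I7 I8 I9 I10
  have pm: "p < m" using I' by auto
  note fr = frac_facts[OF I'(3) pm]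
  have Y: "Y1 v = 3 * real k" "Y2 v = 3 * real k + 1" "Y1 w = 3 * real k" "Y2 w = 3 * real k + 1"
    using v w same unfolding Y1_def Y2_def k_def by auto
  have Xv: "X1 v = 4 * real i + 1 + (real p - 1) / (real m - 1)"
    "X2 v = 4 * real i + 1 + real p / (real m - 1)" "Z1 v = 3 * real i" "Z2 v = 3 * real j + 1"
    using v same pm unfolding X1_def X2_def Z1_def Z2_def p_def by auto
  have Xw: "p' < m \<Longrightarrow> X1 w = 4 * real i + 1 + (real p' - 1) / (real m - 1)"
    "\<not> p' < m \<Longrightarrow> X1 w = 4 * real i + 2"
    "p' < m \<Longrightarrow> Z1 w = 3 * real i" "\<not> p' < m \<Longrightarrow> Z1 w = 3 * real j" "Z2 w = 3 * real j + 1"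
    using w unfolding X1_def Z1_def Z2_def p'_def m_def i_def j_def by auto
  have adj: "{v, w} \<in> F \<longleftrightarrow> v = Q e ! (p' - 1) \<or> v = Q e ! (p' + 1)"
  proof -
    have p'b: "1 \<le> p'" "p' \<le> length (Q e) - 2" using Iw(3) I'(4,9) unfolding p'_def by auto
    show ?thesis using adj_char[OF I'(1) p'b, of v] I'(6) by simp
  qed
  have d: "distinct (Q e)" using Qprops(3)[OF I'(1)] .
  show ?thesis
  proof (cases "p' = p + 1")
    case True
    have "v = Q e ! (p' - 1)" using True I'(5) by simp
    then have F: "{v, w} \<in> F" using adj by blast
    have X: "X2 v = X1 w"
    proof (cases "p' < m")
      case True
      have "real p' - 1 = real p" using \<open>p' = p + 1\<close> by simp
      then show ?thesis using Xv(2) Xw(1)[OF True] by simp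
    next
      case False
      then have "p = m - 1" using True I4 by linarith
      then have "real p / (real m - 1) = 1" using fr(3) by blast
      then show ?thesis using Xv(2) Xw(2)[OF False] by simp
    qed
    have Zw: "Z1 w \<le> 3 * real j" using Xw(3,4) I7 by (cases "p' < m") auto
    have Z: "max (Z1 v) (Z1 w) < min (Z2 v) (Z2 w)" using Zw I7 Xv(3,4) Xw(5) by simp
    have YY: "max (Y1 v) (Y1 w) < min (Y2 v) (Y2 w)" using Y by simp
    have "touch v w" unfolding touch_def using X YY Z by blast
    then show ?thesis using F unfolding good_def by auto
  next
    case False
    have nF: "{v, w} \<notin> F"
    proof
      assume "{v, w} \<in> F"
      then have "v = Q e ! (p' - 1) \<or> v = Q e ! (p' + 1)" using adj by auto
      then have "p = p' - 1 \<or> p = p' + 1" using d I' I'(5)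
        by (auto simp: nth_eq_iff_index_eq)
      then show False using False I' by auto
    qed
    have "X2 v < X1 w"
    proof (cases "p' < m")
      case True
      have "real p < real p' - 1" using False I'(10) by auto
      then have "real p / (real m - 1) < (real p' - 1) / (real m - 1)"
        using pm I2 by (intro divide_strict_right_mono) auto
      then show ?thesis using Xv Xw True by auto
    next
      case nm: False
      then have "p < m - 1" using False I' by auto
      then show ?thesis using Xv Xw nm fr by auto
    qed
    then show ?thesis using nF unfolding good_def sep_def by auto
  qed
qed

lemma good_all:
  assumes "v \<in> W" "w \<in> W" "v \<noteq> w"
  shows "good v w"
proof (cases "v \<in> f ` V")
  case vV: True
  show ?thesis
  proof (cases "w \<in> f ` V")
    case True show ?thesis using good_VV[OF vV True assms(3)] .
  next
    case False show ?thesis using good_VI[OF vV assms(2) False] .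
  qed
next
  case vV: False
  show ?thesis
  proof (cases "w \<in> f ` V")
    case True
    have "good w v" using good_VI[OF True assms(1) vV] .
    then show ?thesis by (rule good_sym)
  next
    case wV: False
    show ?thesis
    proof (cases "eo v = eo w")
      case False show ?thesis using good_II_diff[OF assms(1) vV assms(2) wV False] .
    next
      case True
      have e1: "Q (eo w) ! po v = v" using internal_facts(5)[OF assms(1) vV] True by simp
      have e2: "Q (eo w) ! po w = w" using internal_facts(5)[OF assms(2) wV] .
      have "po v \<noteq> po w" using e1 e2 assms(3) by auto
      then consider "po v < po w" | "po w < po v" by linarith
      then show ?thesis
      proof cases
        case 1 show ?thesis using good_II_same[OF assms(1) vV assms(2) wV True 1] .
      next
        case 2
        have "good w v" using good_II_same[OF assms(2) wV assms(1) vV True[symmetric] 2] .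
        then show ?thesis by (rule good_sym)
      qed
    qed
  qed
qed

lemma pos_all:
  assumes "w \<in> W"
  shows "X1 w < X2 w" "Y1 w < Y2 w" "Z1 w < Z2 w"
proof -
  show "Y1 w < Y2 w" unfolding Y1_def Y2_def by auto
  show "Z1 w < Z2 w"
  proof (cases "w \<in> f ` V")
    case False
    then show ?thesis using internal_facts(6)[OF assms False] unfolding Z1_def Z2_def by auto
  qed (auto simp: Z1_def Z2_def)
  show "X1 w < X2 w"
  proof (cases "w \<in> f ` V")
    case False
    note I = internal_facts[OF assms False]
    show ?thesis
    proof (cases "po w < mm w")
      case True
      have "(real (po w) - 1) / (real (mm w) - 1) < real (po w) / (real (mm w) - 1)"
        using True I(2) by (intro divide_strict_right_mono) auto
      then show ?thesis using True False unfolding X1_def X2_def by auto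
    next
      case nm: False
      then show ?thesis using I(6) False unfolding X1_def X2_def by auto
    qed
  qed (auto simp: X1_def X2_def)
qed

end

context subd begin

definition lo :: "'b \<Rightarrow> real^3" where "lo w = vector [X1 w, Y1 w, Z1 w]"
definition hi :: "'b \<Rightarrow> real^3" where "hi w = vector [X2 w, Y2 w, Z2 w]"

lemma lohi_simps:
  "lo w $ 1 = X1 w" "lo w $ 2 = Y1 w" "lo w $ 3 = Z1 w"
  "hi w $ 1 = X2 w" "hi w $ 2 = Y2 w" "hi w $ 3 = Z2 w"
  unfolding lo_def hi_def by simp_all

lemma lohi_pos: "w \<in> W \<Longrightarrow> \<forall>i. lo w $ i < hi w $ i"
proof
  fix i :: 3
  assume "w \<in> W"
  then have p: "X1 w < X2 w" "Y1 w < Y2 w" "Z1 w < Z2 w" using pos_all by blast+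
  show "lo w $ i < hi w $ i" using exhaust_3[of i] by (elim disjE) (simp_all add: lohi_simps p)
qed

lemma touch_geo:
  assumes "v \<in> W" "w \<in> W" "touch v w \<or> touch w v"
  shows "interior (cbox (lo v) (hi v)) \<inter> interior (cbox (lo w) (hi w)) = {}"
    "cbox (lo v) (hi v) \<inter> cbox (lo w) (hi w) \<noteq> {}"
    "\<exists>a b. cbox (lo v) (hi v) \<inter> cbox (lo w) (hi w) = cbox a b \<and>
                a $ 1 = b $ 1 \<and> a $ 2 < b $ 2 \<and> a $ 3 < b $ 3"
proof -
  note pv = lohi_pos[OF assms(1)] and pw = lohi_pos[OF assms(2)]
  have "(interior (cbox (lo v) (hi v)) \<inter> interior (cbox (lo w) (hi w)) = {} \<and>
    cbox (lo v) (hi v) \<inter> cbox (lo w) (hi w) \<noteq> {}) \<and>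
    (\<exists>a b. cbox (lo v) (hi v) \<inter> cbox (lo w) (hi w) = cbox a b \<and>
                a $ 1 = b $ 1 \<and> a $ 2 < b $ 2 \<and> a $ 3 < b $ 3)"
  proof (cases "touch v w")
    case True
    have t: "hi v $ 1 = lo w $ 1" "max (lo v$2) (lo w$2) < min (hi v$2) (hi w$2)"
      "max (lo v$3) (lo w$3) < min (hi v$3) (hi w$3)"
      using True unfolding touch_def lohi_simps by auto
    note g = geo_touch[OF pv pw t]
    show ?thesis using g by blast
  next
    case False
    then have tw: "touch w v" using assms(3) by blast
    have t: "hi w $ 1 = lo v $ 1" "max (lo w$2) (lo v$2) < min (hi w$2) (hi v$2)"
      "max (lo w$3) (lo v$3) < min (hi w$3) (hi v$3)"
      using tw unfolding touch_def lohi_simps by auto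
    note g = geo_touch'[OF pv pw t]
    show ?thesis using g by blast
  qed
  then show "interior (cbox (lo v) (hi v)) \<inter> interior (cbox (lo w) (hi w)) = {}"
    "cbox (lo v) (hi v) \<inter> cbox (lo w) (hi w) \<noteq> {}"
    "\<exists>a b. cbox (lo v) (hi v) \<inter> cbox (lo w) (hi w) = cbox a b \<and>
                a $ 1 = b $ 1 \<and> a $ 2 < b $ 2 \<and> a $ 3 < b $ 3" by blast+
qed

lemma sep_geo:
  assumes "sep v w"
  shows "interior (cbox (lo v) (hi v)) \<inter> interior (cbox (lo w) (hi w)) = {}"
    "cbox (lo v) (hi v) \<inter> cbox (lo w) (hi w) = {}"
proof -
  have "(hi v $ 1 < lo w $ 1 \<or> hi w $ 1 < lo v $ 1) \<or> (hi v $ 2 < lo w $ 2 \<or> hi w $ 2 < lo v $ 2)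
     \<or> (hi v $ 3 < lo w $ 3 \<or> hi w $ 3 < lo v $ 3)"
    using assms unfolding sep_def lohi_simps by blast
  then obtain i where "hi v $ i < lo w $ i \<or> hi w $ i < lo v $ i" by blast
  then show "interior (cbox (lo v) (hi v)) \<inter> interior (cbox (lo w) (hi w)) = {}"
    "cbox (lo v) (hi v) \<inter> cbox (lo w) (hi w) = {}" using geo_sep by blast+
qed

lemma cbu3_W: "cbu3 W F"
  unfolding cbu3_def
proof (rule exI[of _ lo], rule exI[of _ hi], rule conjI)
  show "\<forall>v\<in>W. \<forall>i. lo v $ i < hi v $ i" using lohi_pos by blast
next
  show "\<forall>v\<in>W. \<forall>w\<in>W. v \<noteq> w \<longrightarrow>
          interior (cbox (lo v) (hi v)) \<inter> interior (cbox (lo w) (hi w)) = {} \<and>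
          ({v, w} \<in> F \<longleftrightarrow> cbox (lo v) (hi v) \<inter> cbox (lo w) (hi w) \<noteq> {}) \<and>
          (cbox (lo v) (hi v) \<inter> cbox (lo w) (hi w) \<noteq> {} \<longrightarrow>
             (\<exists>a b. cbox (lo v) (hi v) \<inter> cbox (lo w) (hi w) = cbox a b \<and>
                a $ 1 = b $ 1 \<and> a $ 2 < b $ 2 \<and> a $ 3 < b $ 3))"
  proof (intro ballI impI)
  fix v w assume vw: "v \<in> W" "w \<in> W" "v \<noteq> w"
  have g: "good v w" using good_all vw .
  show "interior (cbox (lo v) (hi v)) \<inter> interior (cbox (lo w) (hi w)) = {} \<and>
          ({v, w} \<in> F \<longleftrightarrow> cbox (lo v) (hi v) \<inter> cbox (lo w) (hi w) \<noteq> {}) \<and>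
          (cbox (lo v) (hi v) \<inter> cbox (lo w) (hi w) \<noteq> {} \<longrightarrow>
             (\<exists>a b. cbox (lo v) (hi v) \<inter> cbox (lo w) (hi w) = cbox a b \<and>
                a $ 1 = b $ 1 \<and> a $ 2 < b $ 2 \<and> a $ 3 < b $ 3))"
  proof (cases "{v, w} \<in> F")
    case True
    then have "touch v w \<or> touch w v" using g unfolding good_def by blast
    note tg = touch_geo[OF vw(1,2) this]
    show ?thesis using tg True by blast
  next
    case False
    then have "sep v w" using g unfolding good_def by blast
    then show ?thesis using sep_geo False by blast
  qed
  qed
qed

end


theorem mainTheorem18:
  fixes V :: "'a set" and E :: "'a set set" and W :: "'b set" and F :: "'b set set"
  assumes "simple_graph V E"
    and "subdivided_twice V E W F"
  shows "cbu3 W F"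
proof -
  have sg: "finite V \<and> (\<forall>e\<in>E. \<exists>u v. u \<noteq> v \<and> u \<in> V \<and> v \<in> V \<and> e = {u, v})"
    using assms(1) unfolding simple_graph_def .
  have finV: "finite V" using sg by (rule conjunct1)
  have Esub: "\<forall>e\<in>E. \<exists>u v. u \<noteq> v \<and> u \<in> V \<and> v \<in> V \<and> e = {u, v}" using sg by (rule conjunct2)
  have "E \<subseteq> Pow V"
  proof
    fix e assume "e \<in> E"
    then obtain u v where "u \<in> V" "v \<in> V" "e = {u, v}" using Esub by blast
    then show "e \<in> Pow V" by simp
  qed
  then have finE: "finite E" by (rule finite_subset) (simp add: finV)
  obtain f :: "'a \<Rightarrow> 'b" and P where fP: "inj_on f V \<and>
       (\<forall>e\<in>E. \<exists>u v. e = {u, v} \<and> length (P e) \<ge> 4 \<and> distinct (P e) \<and>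
                  hd (P e) = f u \<and> last (P e) = f v \<and> internal (P e) \<inter> f ` V = {}) \<and>
       (\<forall>e\<in>E. \<forall>e'\<in>E. e \<noteq> e' \<longrightarrow> internal (P e) \<inter> internal (P e') = {}) \<and>
       W = f ` V \<union> (\<Union>e\<in>E. set (P e)) \<and>
       F = (\<Union>e\<in>E. path_edges (P e))"
    using assms(2) unfolding subdivided_twice_def by (elim exE) (rule that)
  note fP1 = conjunct1[OF fP]
  note fP2 = conjunct1[OF conjunct2[OF fP]]
  note fP3 = conjunct1[OF conjunct2[OF conjunct2[OF fP]]]
  note fP4 = conjunct1[OF conjunct2[OF conjunct2[OF conjunct2[OF fP]]]]
  note fP5 = conjunct2[OF conjunct2[OF conjunct2[OF conjunct2[OF fP]]]]
  obtain a :: "'a \<Rightarrow> nat" and n where a: "a ` V = {i. i < n}" "inj_on a V"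
    using finite_imp_inj_to_nat_seg[OF finV] by blast
  obtain bi :: "'a set \<Rightarrow> nat" and K where b: "bi ` E = {i. i < K}" "inj_on bi E"
    using finite_imp_inj_to_nat_seg[OF finE] by blast
  have bK: "\<forall>e\<in>E. bi e < K" using b(1) by auto
  have "subd V E W F f P a bi K"
    by (rule subd.intro[OF Esub fP1 a(2) b(2) bK fP2 fP3 fP4 fP5])
  then show ?thesis by (rule subd.cbu3_W)
qed

end
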